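(* Let $T>0$ and let $(X^N)_{N\ge1}$ be a sequence of real-valued stochastic processes with càdlàg paths on $[0,T]$. Suppose that $\sup_{N\ge1}\mathbb E[(X^N(0))^2+(X^N(T))^2]<\infty$, and that there exist $\alpha>1/2$, $\beta>1/2$ and a nondecreasing continuous function $G$ with $G(0)=0$ such that for all $0\le r\le s\le t\le T$, all $N\ge1$ and all $\lambda>0$, $$\mathbb P\big(|X^N(s)-X^N(r)|\wedge|X^N(t)-X^N(s)|\ge\lambda\big)\le\frac{[G(t)-G(r)]^{2\alpha}}{\lambda^{4\beta}}.$$ Then $\sup_{N\ge1}\mathbb E\big[\sup_{0\le t\le T}|X^N(t)|^2\big]<\infty$. *)

theory Defs
  imports "HOL-Probability.Probability"
begin

definition cadlag_on :: "real \<Rightarrow> (real \<Rightarrow> real) \<Rightarrow> bool" where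
  "cadlag_on T f \<longleftrightarrow>
     (\<forall>t\<in>{0..<T}. (f \<longlongrightarrow> f t) (at_right t)) \<and>
     (\<forall>t\<in>{0<..T}. \<exists>l. (f \<longlongrightarrow> l) (at_left t))"

end

theory Submission
  imports Defs
begin


definition oscF :: "(real \<Rightarrow> 'w \<Rightarrow> real) \<Rightarrow> real set \<Rightarrow> 'w \<Rightarrow> real" where
  "oscF X F \<omega> = (MAX t\<in>F. min \<bar>X t \<omega> - X (Min F) \<omega>\<bar> \<bar>X (Max F) \<omega> - X t \<omega>\<bar>)"

definition cc :: "real \<Rightarrow> real" where "cc a = 2 powr (1 - 2*a)"
definition qq :: "real \<Rightarrow> real" where "qq a = (1 + cc a) / (2 * cc a)"
definition th :: "real \<Rightarrow> real \<Rightarrow> real" where "th a b = 1 - qq a powr (-1/(4*b))"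
definition KK :: "real \<Rightarrow> real \<Rightarrow> real" where
  "KK a b = 4 / (th a b powr (4*b) * (1 - cc a))"

lemma consts_facts:
  assumes a: "a > 1/2" and b: "b > 0"
  shows "0 < cc a" "cc a < 1" "1 < qq a" "0 < th a b" "th a b < 1" "KK a b > 0"
    "(1 - th a b) powr (4*b) = 1 / qq a" "cc a * qq a = (1 + cc a)/2"
    "KK a b * th a b powr (4*b) * (1 - cc a) = 4"
proof -
  show c0: "0 < cc a" by (simp add: cc_def)
  have "2 powr (1 - 2*a) < 2 powr 0" by (rule powr_less_mono) (use a in auto)
  then show c1: "cc a < 1" by (simp add: cc_def)
  show q1: "1 < qq a" using c0 c1 by (simp add: qq_def field_simps)
  have "qq a powr (-1/(4*b)) < qq a powr 0" by (rule powr_less_mono) (use b q1 in auto)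
  then show "0 < th a b" using q1 by (simp add: th_def)
  show "th a b < 1" using q1 by (simp add: th_def)
  have tp: "0 < th a b" using \<open>0 < th a b\<close> .
  show "KK a b > 0" using tp c1 by (simp add: KK_def)
  have "(1 - th a b) powr (4*b) = (qq a powr (-1/(4*b))) powr (4*b)" by (simp add: th_def)
  also have "\<dots> = qq a powr (-1)" using b by (simp add: powr_powr)
  also have "\<dots> = 1 / qq a" using q1 by (simp add: powr_minus_divide)
  finally show "(1 - th a b) powr (4*b) = 1 / qq a" .
  show "cc a * qq a = (1 + cc a)/2" using c0 by (simp add: qq_def)
  show "KK a b * th a b powr (4*b) * (1 - cc a) = 4" using tp c1 by (simp add: KK_def field_simps)
qed

lemma numeric:
  assumes a: "a > 1/2" and b: "b > 0" and u: "u \<ge> 0"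
    and u1: "0 \<le> u1" "u1 \<le> u/2" and u2: "0 \<le> u2" "u2 \<le> u/2" and l: "l > 0"
  shows "KK a b * u1 powr (2*a) / ((1 - th a b) * l) powr (4*b)
       + KK a b * u2 powr (2*a) / ((1 - th a b) * l) powr (4*b)
       + 2 * (u powr (2*a) / (th a b * l) powr (4*b))
       \<le> KK a b * u powr (2*a) / l powr (4*b)"
proof -
  note F = consts_facts[OF a b]
  define K where "K = KK a b"
  define t where "t = th a b"
  define c where "c = cc a"
  define q where "q = qq a"
  define P where "P = u powr (2*a)"
  define L where "L = l powr (4*b)"
  define B where "B = t powr (4*b)"
  have K0: "K > 0" and t0: "0 < t" "t < 1" and c0: "0 < c" "c < 1" and q1: "1 < q"
    using F by (auto simp: K_def t_def c_def q_def)
  have L0: "L > 0" using l by (simp add: L_def)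
  have B0: "B > 0" using t0 by (simp add: B_def)
  have A: "(1 - t) powr (4*b) = 1/q" using F by (simp add: t_def q_def)
  have cq: "c * q = (1 + c)/2" using F by (simp add: c_def q_def)
  have KB: "K * B * (1 - c) = 4" using F by (simp add: K_def B_def c_def t_def)
  have h2: "(u/2) powr (2*a) = P * c / 2"
    by (simp add: P_def c_def cc_def powr_divide powr_diff)
  have m1: "u1 powr (2*a) \<le> P * c / 2"
    using u1 a h2 powr_mono2[of "2*a" u1 "u/2"] by simp
  have m2: "u2 powr (2*a) \<le> P * c / 2"
    using u2 a h2 powr_mono2[of "2*a" u2 "u/2"] by simp
  have e1: "((1 - t) * l) powr (4*b) = L / q" using t0 l A by (simp add: powr_mult L_def)
  have e2: "(t * l) powr (4*b) = B * L" using t0 l by (simp add: powr_mult L_def B_def)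
  have "K * u1 powr (2*a) / (L/q) + K * u2 powr (2*a) / (L/q) + 2 * (P / (B*L))
      \<le> K * (P*c/2) / (L/q) + K * (P*c/2) / (L/q) + 2 * (P / (B*L))"
    using m1 m2 K0 L0 q1 B0 by (intro add_mono divide_right_mono mult_left_mono) auto
  also have "\<dots> = K * P / L"
  proof -
    have "K * (P*c/2) / (L/q) + K * (P*c/2) / (L/q) = K * P * (c*q) / L" using L0 q1 by (simp add: field_simps)
    also have "\<dots> = K * P * (1+c) / 2 / L" unfolding cq by simp
    finally have 1: "K * (P*c/2) / (L/q) + K * (P*c/2) / (L/q) = K * P * (1+c) / 2 / L" .
    have 2: "2 * (P / (B*L)) = K * P * (1 - c) / 2 / L"
    proof -
      have iB: "1/B = K * (1-c) / 4" using KB B0 by (simp add: field_simps)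
      have "2 * (P / (B*L)) = 2 * P * (1/B) / L" by simp
      also have "\<dots> = K * P * (1 - c) / 2 / L" unfolding iB by simp
      finally show ?thesis .
    qed
    show ?thesis unfolding 1 2 using L0 by (simp add: field_simps)
  qed
  finally show ?thesis using e1 e2 by (simp add: K_def t_def P_def L_def)
qed
lemma key1:
  fixes x y z z' e :: real
  shows "min \<bar>y - x\<bar> \<bar>z' - y\<bar> \<le> e \<Longrightarrow> min \<bar>y - x\<bar> \<bar>z - y\<bar> \<le> e + min \<bar>z' - x\<bar> \<bar>z - z'\<bar>"
  unfolding min_def by (smt (verit))

lemma key2:
  fixes x y z w e :: real
  shows "min \<bar>y - w\<bar> \<bar>z - y\<bar> \<le> e \<Longrightarrow> min \<bar>y - x\<bar> \<bar>z - y\<bar> \<le> e + min \<bar>w - x\<bar> \<bar>z - w\<bar>"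
  unfolding min_def by (smt (verit))

lemma oscF_meas:
  fixes X :: "real \<Rightarrow> 'a \<Rightarrow> real"
  assumes meas: "\<And>t. t \<in> {0..T} \<Longrightarrow> X t \<in> borel_measurable M"
    and F: "finite F" "F \<noteq> {}" "F \<subseteq> {0..T}"
  shows "oscF X F \<in> borel_measurable M"
proof -
  have mF: "Min F \<in> F" "Max F \<in> F" using F by auto
  have e: "oscF X F = (\<lambda>\<omega>. MAX t\<in>F. min \<bar>X t \<omega> - X (Min F) \<omega>\<bar> \<bar>X (Max F) \<omega> - X t \<omega>\<bar>)"
    by (rule ext) (simp add: oscF_def)
  show ?thesis unfolding e
    apply (rule borel_measurable_Max[OF F(1)])
    using mF F(3) meas by (intro borel_measurable_min borel_measurable_abs borel_measurable_diff; blast)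
qed

lemma oscF_nonneg: "finite F \<Longrightarrow> F \<noteq> {} \<Longrightarrow> 0 \<le> oscF X F \<omega>"
  unfolding oscF_def by (auto simp: Max_ge_iff)

lemma (in prob_space) tail_bound:
  fixes X :: "real \<Rightarrow> 'a \<Rightarrow> real" and G :: "real \<Rightarrow> real"
  assumes meas: "\<And>t. t \<in> {0..T} \<Longrightarrow> X t \<in> borel_measurable M"
    and Gm: "mono_on {0..T} G" and al: "\<alpha> > 1/2" and be: "\<beta> > 0"
    and tight: "\<And>r s t c. 0 \<le> r \<Longrightarrow> r \<le> s \<Longrightarrow> s \<le> t \<Longrightarrow> t \<le> T \<Longrightarrow> c > 0 \<Longrightarrow>
        prob {\<omega> \<in> space M. min \<bar>X s \<omega> - X r \<omega>\<bar> \<bar>X t \<omega> - X s \<omega>\<bar> \<ge> c}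
          \<le> (G t - G r) powr (2 * \<alpha>) / c powr (4 * \<beta>)"
  shows "finite F \<Longrightarrow> F \<noteq> {} \<Longrightarrow> F \<subseteq> {0..T} \<Longrightarrow> l > 0 \<Longrightarrow>
     prob {\<omega> \<in> space M. l \<le> oscF X F \<omega>} \<le> KK \<alpha> \<beta> * (G (Max F) - G (Min F)) powr (2*\<alpha>) / l powr (4*\<beta>)"
proof (induction "card F" arbitrary: F l rule: less_induct)
  case less
  note fin = less.prems(1) and ne = less.prems(2) and sub = less.prems(3) and l0 = less.prems(4)
  define a where "a = Min F"
  define b where "b = Max F"
  have aF: "a \<in> F" and bF: "b \<in> F" using fin ne by (auto simp: a_def b_def)
  have ab: "a \<le> b" using fin ne by (simp add: a_def b_def)
  have aT: "0 \<le> a" "b \<le> T" using aF bF sub by auto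
  have leab: "a \<le> t" "t \<le> b" if "t \<in> F" for t using fin that by (auto simp: a_def b_def)
  have Gab: "G a \<le> G b" using Gm ab aT by (intro mono_onD[OF Gm]) auto
  have measX: "X t \<in> borel_measurable M" if "t \<in> F" for t using sub that meas by blast
  have setm: "{\<omega> \<in> space M. c \<le> f \<omega>} \<in> sets M" if "f \<in> borel_measurable M" for f :: "'a \<Rightarrow> real" and c
    using that by measurable
  have oscm: "oscF X F' \<in> borel_measurable M" if "finite F'" "F' \<noteq> {}" "F' \<subseteq> F" for F'
  proof (rule oscF_meas[OF meas that(1,2)])
    show "F' \<subseteq> {0..T}" using that(3) sub by (rule order_trans)
  qed simp
  show ?case
  proof (cases "G b - G a = 0")
    case True
    let ?A = "\<lambda>t. {\<omega> \<in> space M. l \<le> min \<bar>X t \<omega> - X a \<omega>\<bar> \<bar>X b \<omega> - X t \<omega>\<bar>}"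
    have gm: "(\<lambda>\<omega>. min \<bar>X t \<omega> - X a \<omega>\<bar> \<bar>X b \<omega> - X t \<omega>\<bar>) \<in> borel_measurable M" if "t \<in> F" for t
      using measX[OF that] measX[OF aF] measX[OF bF]
      by (intro borel_measurable_min borel_measurable_abs borel_measurable_diff)
    have Am: "?A t \<in> sets M" if "t \<in> F" for t using setm[OF gm[OF that]] .
    have "{\<omega> \<in> space M. l \<le> oscF X F \<omega>} \<subseteq> (\<Union>t\<in>F. ?A t)"
    proof
      fix \<omega> assume "\<omega> \<in> {\<omega> \<in> space M. l \<le> oscF X F \<omega>}"
      then have "\<omega> \<in> space M" "l \<le> (MAX t\<in>F. min \<bar>X t \<omega> - X a \<omega>\<bar> \<bar>X b \<omega> - X t \<omega>\<bar>)"
        by (auto simp: oscF_def a_def b_def)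
      then show "\<omega> \<in> (\<Union>t\<in>F. ?A t)" using fin ne by (simp add: Max_ge_iff)
    qed
    then have "prob {\<omega> \<in> space M. l \<le> oscF X F \<omega>} \<le> prob (\<Union>t\<in>F. ?A t)"
      using fin Am by (intro finite_measure_mono sets.finite_UN) auto
    also have "\<dots> \<le> (\<Sum>t\<in>F. prob (?A t))"
      using fin Am by (intro measure_UNION_le) auto
    also have "\<dots> \<le> (\<Sum>t\<in>F. 0)"
    proof (rule sum_mono)
      fix t assume t: "t \<in> F"
      have "prob (?A t) \<le> (G b - G a) powr (2 * \<alpha>) / l powr (4 * \<beta>)"
        using tight[of a t b l] leab[OF t] aT l0 by simp
      then show "prob (?A t) \<le> 0" using True by simp
    qed
    finally show ?thesis using True by (simp add: a_def b_def)
  next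
    case False
    define u where "u = G b - G a"
    have u0: "u > 0" using False Gab by (simp add: u_def)
    define F1 where "F1 = {t \<in> F. G t - G a \<le> u/2}"
    define F2 where "F2 = {t \<in> F. \<not> G t - G a \<le> u/2}"
    have aF1: "a \<in> F1" using aF u0 by (simp add: F1_def)
    have bF2: "b \<in> F2" using bF u0 by (simp add: F2_def u_def)
    have F12: "F1 \<subseteq> F" "F2 \<subseteq> F" "F = F1 \<union> F2" by (auto simp: F1_def F2_def)
    have fin12: "finite F1" "finite F2" using fin F12 by (auto intro: finite_subset)
    have ne12: "F1 \<noteq> {}" "F2 \<noteq> {}" using aF1 bF2 by auto
    have bn: "b \<notin> F1" using bF2 by (simp add: F1_def F2_def)
    have an: "a \<notin> F2" using aF1 by (simp add: F1_def F2_def)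
    have "F1 \<subset> F" using F12(1) bF bn by blast
    then have c1: "card F1 < card F" by (rule psubset_card_mono[OF fin])
    have "F2 \<subset> F" using F12(2) aF an by blast
    then have c2: "card F2 < card F" by (rule psubset_card_mono[OF fin])
    note card12 = c1 c2
    have lt12: "t1 < t2" if "t1 \<in> F1" "t2 \<in> F2" for t1 t2
    proof (rule ccontr)
      assume "\<not> t1 < t2"
      then have "G t2 \<le> G t1" using that sub F12 by (intro mono_onD[OF Gm]) auto
      then show False using that by (auto simp: F1_def F2_def)
    qed
    define a' where "a' = Max F1"
    define b' where "b' = Min F2"
    have a'F1: "a' \<in> F1" and b'F2: "b' \<in> F2" using fin12 ne12 by (auto simp: a'_def b'_def)
    have minF1: "Min F1 = a"
      using fin12 aF1 F12 leab by (intro Min_eqI) auto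
    have maxF2: "Max F2 = b"
      using fin12 bF2 F12 leab by (intro Max_eqI) auto
    have sa': "a \<le> a'" "a' \<le> b" "a \<le> b'" "b' \<le> b" using a'F1 b'F2 F12 leab by auto
    have a'T: "a' \<in> {0..T}" "b' \<in> {0..T}" "a \<in> {0..T}" "b \<in> {0..T}"
      using a'F1 b'F2 F12 sub aF bF by auto
    have "G a \<le> G a'" by (rule mono_onD[OF Gm a'T(3) a'T(1) sa'(1)])
    moreover have "G a' - G a \<le> u/2" using a'F1 by (simp add: F1_def)
    ultimately have u1: "0 \<le> G a' - G a" "G a' - G a \<le> u/2" by simp_all
    have "G b' \<le> G b" by (rule mono_onD[OF Gm a'T(2) a'T(4) sa'(4)])
    moreover have "\<not> G b' - G a \<le> u/2" using b'F2 by (simp add: F2_def)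
    ultimately have u2: "0 \<le> G b - G b'" "G b - G b' \<le> u/2" by (simp_all add: u_def)
    define D1 where "D1 = (\<lambda>\<omega>. min \<bar>X a' \<omega> - X a \<omega>\<bar> \<bar>X b \<omega> - X a' \<omega>\<bar>)"
    define D2 where "D2 = (\<lambda>\<omega>. min \<bar>X b' \<omega> - X a \<omega>\<bar> \<bar>X b \<omega> - X b' \<omega>\<bar>)"
    have det: "oscF X F \<omega> \<le> max (oscF X F1 \<omega> + D1 \<omega>) (oscF X F2 \<omega> + D2 \<omega>)" for \<omega>
    proof -
      have "min \<bar>X t \<omega> - X a \<omega>\<bar> \<bar>X b \<omega> - X t \<omega>\<bar> \<le> max (oscF X F1 \<omega> + D1 \<omega>) (oscF X F2 \<omega> + D2 \<omega>)"
        if t: "t \<in> F" for t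
      proof (cases "t \<in> F1")
        case True
        have "min \<bar>X t \<omega> - X a \<omega>\<bar> \<bar>X a' \<omega> - X t \<omega>\<bar> \<le> oscF X F1 \<omega>"
          unfolding oscF_def minF1 a'_def[symmetric] using fin12 True by (intro Max_ge) auto
        from key1[where z="X b \<omega>", OF this] show ?thesis unfolding D1_def by linarith
      next
        case False
        then have t2: "t \<in> F2" using t F12 by auto
        have "min \<bar>X t \<omega> - X b' \<omega>\<bar> \<bar>X b \<omega> - X t \<omega>\<bar> \<le> oscF X F2 \<omega>"
          unfolding oscF_def maxF2 b'_def[symmetric] using fin12 t2 by (intro Max_ge) auto
        from key2[where x="X a \<omega>", OF this] show ?thesis unfolding D2_def by linarith
      qed
      then show ?thesis unfolding oscF_def a_def[symmetric] b_def[symmetric] using fin ne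
        by (simp add: Max_le_iff)
    qed
    define \<theta> where "\<theta> = th \<alpha> \<beta>"
    have th: "0 < \<theta>" "\<theta> < 1" using consts_facts[OF al be] by (auto simp: \<theta>_def)
    let ?E = "\<lambda>f c. {\<omega> \<in> space M. c \<le> f \<omega>}"
    have D1m: "D1 \<in> borel_measurable M" "D2 \<in> borel_measurable M"
      unfolding D1_def D2_def using measX aF bF a'F1 b'F2 F12
      by (auto intro!: borel_measurable_min borel_measurable_abs borel_measurable_diff)
    have incl: "?E (oscF X F) l \<subseteq> ?E (oscF X F1) ((1-\<theta>)*l) \<union> ?E (oscF X F2) ((1-\<theta>)*l)
        \<union> ?E D1 (\<theta>*l) \<union> ?E D2 (\<theta>*l)"
    proof
      fix \<omega> assume "\<omega> \<in> ?E (oscF X F) l"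
      then have "\<omega> \<in> space M" "l \<le> max (oscF X F1 \<omega> + D1 \<omega>) (oscF X F2 \<omega> + D2 \<omega>)"
        using det[of \<omega>] by auto
      then show "\<omega> \<in> ?E (oscF X F1) ((1-\<theta>)*l) \<union> ?E (oscF X F2) ((1-\<theta>)*l)
        \<union> ?E D1 (\<theta>*l) \<union> ?E D2 (\<theta>*l)"
        by (auto simp: algebra_simps max_def split: if_splits)
    qed
    have m1: "?E (oscF X F1) ((1-\<theta>)*l) \<in> sets M" "?E (oscF X F2) ((1-\<theta>)*l) \<in> sets M"
      "?E D1 (\<theta>*l) \<in> sets M" "?E D2 (\<theta>*l) \<in> sets M"
      using oscm[OF fin12(1) ne12(1) F12(1)] oscm[OF fin12(2) ne12(2) F12(2)] D1m by (auto intro!: setm)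
    have "prob (?E (oscF X F) l) \<le> prob (?E (oscF X F1) ((1-\<theta>)*l) \<union> ?E (oscF X F2) ((1-\<theta>)*l)
        \<union> ?E D1 (\<theta>*l) \<union> ?E D2 (\<theta>*l))"
      using m1 by (intro finite_measure_mono[OF incl]) auto
    also have "\<dots> \<le> prob (?E (oscF X F1) ((1-\<theta>)*l)) + prob (?E (oscF X F2) ((1-\<theta>)*l))
        + prob (?E D1 (\<theta>*l)) + prob (?E D2 (\<theta>*l))"
      using m1 by (smt (verit) measure_Un_le sets.Un)
    also have "\<dots> \<le> KK \<alpha> \<beta> * (G a' - G a) powr (2*\<alpha>) / ((1-\<theta>)*l) powr (4*\<beta>)
        + KK \<alpha> \<beta> * (G b - G b') powr (2*\<alpha>) / ((1-\<theta>)*l) powr (4*\<beta>)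
        + u powr (2*\<alpha>) / (\<theta>*l) powr (4*\<beta>) + u powr (2*\<alpha>) / (\<theta>*l) powr (4*\<beta>)"
    proof (intro add_mono)
      show "prob (?E (oscF X F1) ((1-\<theta>)*l)) \<le> KK \<alpha> \<beta> * (G a' - G a) powr (2*\<alpha>) / ((1-\<theta>)*l) powr (4*\<beta>)"
        using less.hyps[OF card12(1) fin12(1) ne12(1)] F12 sub th l0 minF1 by (simp add: a'_def)
      show "prob (?E (oscF X F2) ((1-\<theta>)*l)) \<le> KK \<alpha> \<beta> * (G b - G b') powr (2*\<alpha>) / ((1-\<theta>)*l) powr (4*\<beta>)"
        using less.hyps[OF card12(2) fin12(2) ne12(2)] F12 sub th l0 maxF2 by (simp add: b'_def)
      show "prob (?E D1 (\<theta>*l)) \<le> u powr (2*\<alpha>) / (\<theta>*l) powr (4*\<beta>)"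
        unfolding D1_def u_def using tight[of a a' b "\<theta>*l"] sa' aT th l0 by simp
      show "prob (?E D2 (\<theta>*l)) \<le> u powr (2*\<alpha>) / (\<theta>*l) powr (4*\<beta>)"
        unfolding D2_def u_def using tight[of a b' b "\<theta>*l"] sa' aT th l0 by simp
    qed
    also have "\<dots> \<le> KK \<alpha> \<beta> * u powr (2*\<alpha>) / l powr (4*\<beta>)"
      using numeric[OF al be _ u1 u2 l0] u0 unfolding \<theta>_def by simp
    finally show ?thesis by (simp add: u_def a_def b_def)
  qed
qed



lemma dyadic_pt:
  fixes x :: real assumes x0: "0 \<le> x"
  shows "ennreal (x\<^sup>2) \<le> 1 + (\<Sum>k. ennreal (4^(Suc k)) * indicator {y. 2^k \<le> y} x)"
proof (cases "x < 1")
  case True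
  then have "x\<^sup>2 \<le> 1" using x0 by (simp add: power_le_one)
  then have "ennreal (x\<^sup>2) \<le> 1" by (simp add: ennreal_le_1)
  then show ?thesis by (simp add: add_increasing2)
next
  case False
  obtain n where n: "x < 2^n" using real_arch_pow[of 2 x] by auto
  define m where "m = (LEAST n. x < 2^n)"
  have m1: "x < 2^m" unfolding m_def by (rule LeastI[of "\<lambda>n. x < 2^n" n, OF n])
  have "m \<noteq> 0" proof assume "m = 0" then show False using m1 False by simp qed
  then obtain k where k: "m = Suc k" by (cases m) auto
  have "\<not> x < 2^k" unfolding m_def by (rule not_less_Least) (simp add: k m_def[symmetric])
  then have k1: "2^k \<le> x" by simp
  have "x\<^sup>2 \<le> (2^m)\<^sup>2" using m1 x0 by (intro power_mono) auto
  also have "\<dots> = ((2::real)^2)^m" by (simp only: power_mult[symmetric] mult.commute)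
  also have "\<dots> = 4^(Suc k)" by (simp add: k)
  finally have xx: "x\<^sup>2 \<le> 4^(Suc k)" .
  have "ennreal (x\<^sup>2) \<le> ennreal (4^(Suc k)) * indicator {y. 2^k \<le> y} x"
    using xx k1 by (simp add: ennreal_leI)
  also have "\<dots> \<le> (\<Sum>k. ennreal (4^(Suc k)) * indicator {y. 2^k \<le> y} x)"
    using ennreal_suminf_lessD[of "\<lambda>k. ennreal (4^(Suc k)) * indicator {y. 2^k \<le> y} x" _ k]
    by (meson not_le order_less_irrefl)
  finally show ?thesis by (simp add: add_increasing)
qed

lemma powr_pow2: "((2::real)^k) powr b = (2 powr b)^k"
proof -
  have "((2::real)^k) powr b = (2 powr real k) powr b" by (simp add: powr_realpow)
  also have "\<dots> = (2 powr b) powr real k" by (simp add: powr_powr mult.commute)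
  also have "\<dots> = (2 powr b)^k" by (simp add: powr_realpow)
  finally show ?thesis .
qed

lemma (in prob_space) moment_from_tail:
  fixes f :: "'a \<Rightarrow> real"
  assumes fm: "f \<in> borel_measurable M" and f0: "\<And>\<omega>. 0 \<le> f \<omega>" and A0: "0 \<le> A" and be: "\<beta> > 1/2"
    and tl: "\<And>l. l > 0 \<Longrightarrow> prob {\<omega> \<in> space M. l \<le> f \<omega>} \<le> A / l powr (4*\<beta>)"
  shows "(\<integral>\<^sup>+\<omega>. ennreal ((f \<omega>)\<^sup>2) \<partial>M) \<le> ennreal (1 + 4*A/(1 - 4 / 2 powr (4*\<beta>)))"
proof -
  define r where "r = 4 / 2 powr (4*\<beta>)"
  have "(2::real) powr 2 < 2 powr (4*\<beta>)" by (rule powr_less_mono) (use be in auto)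
  then have p4: "4 < (2::real) powr (4*\<beta>)" by simp
  have r: "0 \<le> r" "r < 1" using p4 by (auto simp: r_def)
  define S where "S = (\<lambda>k::nat. {\<omega> \<in> space M. 2^k \<le> f \<omega>})"
  have Sm: "S k \<in> sets M" for k unfolding S_def using fm by measurable
  have "(\<integral>\<^sup>+\<omega>. ennreal ((f \<omega>)\<^sup>2) \<partial>M)
      \<le> (\<integral>\<^sup>+\<omega>. 1 + (\<Sum>k. ennreal (4^(Suc k)) * indicator (S k) \<omega>) \<partial>M)"
  proof (rule nn_integral_mono)
    fix \<omega> assume w: "\<omega> \<in> space M"
    have "indicator {y. 2^k \<le> y} (f \<omega>) = (indicator (S k) \<omega> :: ennreal)" for k
      using w by (simp add: S_def indicator_def)
    then show "ennreal ((f \<omega>)\<^sup>2) \<le> 1 + (\<Sum>k. ennreal (4^(Suc k)) * indicator (S k) \<omega>)"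
      using dyadic_pt[OF f0[of \<omega>]] by simp
  qed
  also have "\<dots> = (\<integral>\<^sup>+\<omega>. 1 \<partial>M) + (\<integral>\<^sup>+\<omega>. (\<Sum>k. ennreal (4^(Suc k)) * indicator (S k) \<omega>) \<partial>M)"
    using Sm by (intro nn_integral_add) auto
  also have "(\<integral>\<^sup>+\<omega>. (\<Sum>k. ennreal (4^(Suc k)) * indicator (S k) \<omega>) \<partial>M)
      = (\<Sum>k. \<integral>\<^sup>+\<omega>. ennreal (4^(Suc k)) * indicator (S k) \<omega> \<partial>M)"
    using Sm by (intro nn_integral_suminf) auto
  also have "\<dots> = (\<Sum>k. ennreal (4^(Suc k)) * emeasure M (S k))"
    using Sm by (simp add: nn_integral_cmult_indicator)
  also have "\<dots> \<le> (\<Sum>k. ennreal (4*A*r^k))"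
  proof (rule suminf_le[OF _ summableI summableI])
    fix k
    have "emeasure M (S k) = ennreal (prob (S k))" by (simp add: emeasure_eq_measure)
    also have "\<dots> \<le> ennreal (A / (2^k) powr (4*\<beta>))"
      using tl[of "2^k"] by (simp add: S_def ennreal_leI)
    finally have "ennreal (4^(Suc k)) * emeasure M (S k) \<le> ennreal (4^(Suc k)) * ennreal (A / (2^k) powr (4*\<beta>))"
      by (rule mult_left_mono) simp
    also have "\<dots> = ennreal (4^(Suc k) * (A / (2^k) powr (4*\<beta>)))"
      by (rule ennreal_mult[symmetric]) (use A0 in auto)
    also have "4^(Suc k) * (A / (2^k) powr (4*\<beta>)) = 4*A*r^k"
      by (simp add: powr_pow2 r_def power_divide)
    finally show "ennreal (4^(Suc k)) * emeasure M (S k) \<le> ennreal (4*A*r^k)" .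
  qed
  also have "(\<Sum>k. ennreal (4*A*r^k)) = ennreal (\<Sum>k. 4*A*r^k)"
    using r A0 by (intro suminf_ennreal2) (auto intro!: summable_mult summable_geometric)
  also have "(\<Sum>k. 4*A*r^k) = 4*A/(1-r)"
    using r by (simp add: suminf_mult suminf_geometric summable_geometric)
  finally have "(\<integral>\<^sup>+\<omega>. ennreal ((f \<omega>)\<^sup>2) \<partial>M) \<le> 1 + ennreal (4*A/(1-r))"
    by (simp add: emeasure_space_1)
  also have "\<dots> = ennreal (1 + 4*A/(1-r))" using r A0 by (simp add: ennreal_plus)
  finally show ?thesis by (simp add: r_def)
qed



lemma sq3: fixes a b c :: real shows "(a + b + c)\<^sup>2 \<le> 3 * (a\<^sup>2 + b\<^sup>2 + c\<^sup>2)"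
proof -
  have "0 \<le> (a - b)\<^sup>2 + (b - c)\<^sup>2 + (a - c)\<^sup>2" by simp
  then show ?thesis by (simp add: power2_eq_square algebra_simps)
qed

lemma (in prob_space) finite_sup_bound:
  fixes X :: "real \<Rightarrow> 'a \<Rightarrow> real" and G :: "real \<Rightarrow> real"
  assumes meas: "\<And>t. t \<in> {0..T} \<Longrightarrow> X t \<in> borel_measurable M"
    and Gm: "mono_on {0..T} G" and al: "\<alpha> > 1/2" and be: "\<beta> > 1/2"
    and tight: "\<And>r s t c. 0 \<le> r \<Longrightarrow> r \<le> s \<Longrightarrow> s \<le> t \<Longrightarrow> t \<le> T \<Longrightarrow> c > 0 \<Longrightarrow>
        prob {\<omega> \<in> space M. min \<bar>X s \<omega> - X r \<omega>\<bar> \<bar>X t \<omega> - X s \<omega>\<bar> \<ge> c}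
          \<le> (G t - G r) powr (2 * \<alpha>) / c powr (4 * \<beta>)"
    and F: "finite F" "0 \<in> F" "T \<in> F" "F \<subseteq> {0..T}"
  shows "(\<integral>\<^sup>+\<omega>. (SUP s\<in>F. ennreal (\<bar>X s \<omega>\<bar>\<^sup>2)) \<partial>M)
     \<le> 3 * (\<integral>\<^sup>+\<omega>. ennreal ((X 0 \<omega>)\<^sup>2 + (X T \<omega>)\<^sup>2) \<partial>M)
       + 3 * ennreal (1 + 4 * (KK \<alpha> \<beta> * (G T - G 0) powr (2*\<alpha>)) / (1 - 4 / 2 powr (4*\<beta>)))"
proof -
  define A where "A = KK \<alpha> \<beta> * (G T - G 0) powr (2*\<alpha>)"
  have ne: "F \<noteq> {}" using F by auto
  have T0: "0 \<le> T" using F by auto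
  have minF: "Min F = 0" using F by (intro Min_eqI) auto
  have maxF: "Max F = T" using F by (intro Max_eqI) auto
  have A0: "0 \<le> A" using consts_facts(6)[OF al, of \<beta>] be by (simp add: A_def)
  define Z where "Z = oscF X F"
  have om: "Z \<in> borel_measurable M" unfolding Z_def by (rule oscF_meas[OF meas F(1) ne F(4)])
  have o0: "0 \<le> Z \<omega>" for \<omega> unfolding Z_def by (rule oscF_nonneg[OF F(1) ne])
  have tl: "prob {\<omega> \<in> space M. l \<le> Z \<omega>} \<le> A / l powr (4*\<beta>)" if "l > 0" for l
    using tail_bound[OF meas Gm al _ tight F(1) ne F(4) that] be unfolding Z_def A_def minF maxF by simp
  have mom: "(\<integral>\<^sup>+\<omega>. ennreal ((Z \<omega>)\<^sup>2) \<partial>M) \<le> ennreal (1 + 4*A/(1 - 4 / 2 powr (4*\<beta>)))"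
    by (rule moment_from_tail[OF om o0 A0 be tl])
  have pt: "(SUP s\<in>F. ennreal (\<bar>X s \<omega>\<bar>\<^sup>2)) \<le> ennreal (3 * ((X 0 \<omega>)\<^sup>2 + (X T \<omega>)\<^sup>2)) + ennreal (3 * (Z \<omega>)\<^sup>2)" for \<omega>
  proof (rule SUP_least)
    fix s assume s: "s \<in> F"
    have "min \<bar>X s \<omega> - X 0 \<omega>\<bar> \<bar>X T \<omega> - X s \<omega>\<bar> \<le> Z \<omega>"
      unfolding Z_def oscF_def minF maxF using F(1) s by (intro Max_ge) auto
    then have "\<bar>X s \<omega>\<bar> \<le> \<bar>X 0 \<omega>\<bar> + \<bar>X T \<omega>\<bar> + Z \<omega>" by (smt (verit))
    then have "\<bar>X s \<omega>\<bar>\<^sup>2 \<le> (\<bar>X 0 \<omega>\<bar> + \<bar>X T \<omega>\<bar> + Z \<omega>)\<^sup>2" by (intro power_mono) auto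
    also have "\<dots> \<le> 3 * (\<bar>X 0 \<omega>\<bar>\<^sup>2 + \<bar>X T \<omega>\<bar>\<^sup>2 + (Z \<omega>)\<^sup>2)" by (rule sq3)
    finally have "\<bar>X s \<omega>\<bar>\<^sup>2 \<le> 3 * ((X 0 \<omega>)\<^sup>2 + (X T \<omega>)\<^sup>2) + 3 * (Z \<omega>)\<^sup>2" by simp
    then have "ennreal (\<bar>X s \<omega>\<bar>\<^sup>2) \<le> ennreal (3 * ((X 0 \<omega>)\<^sup>2 + (X T \<omega>)\<^sup>2) + 3 * (Z \<omega>)\<^sup>2)"
      by (rule ennreal_leI)
    also have "\<dots> = ennreal (3 * ((X 0 \<omega>)\<^sup>2 + (X T \<omega>)\<^sup>2)) + ennreal (3 * (Z \<omega>)\<^sup>2)"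
      by (rule ennreal_plus) auto
    finally show "ennreal (\<bar>X s \<omega>\<bar>\<^sup>2) \<le> ennreal (3 * ((X 0 \<omega>)\<^sup>2 + (X T \<omega>)\<^sup>2)) + ennreal (3 * (Z \<omega>)\<^sup>2)" .
  qed
  have e3: "ennreal (3 * y) = 3 * ennreal y" if "0 \<le> y" for y
    using that by (simp add: ennreal_mult)
  have m0: "X 0 \<in> borel_measurable M" "X T \<in> borel_measurable M" using meas T0 by auto
  have "(\<integral>\<^sup>+\<omega>. (SUP s\<in>F. ennreal (\<bar>X s \<omega>\<bar>\<^sup>2)) \<partial>M)
     \<le> (\<integral>\<^sup>+\<omega>. ennreal (3 * ((X 0 \<omega>)\<^sup>2 + (X T \<omega>)\<^sup>2)) + ennreal (3 * (Z \<omega>)\<^sup>2) \<partial>M)"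
    by (rule nn_integral_mono) (rule pt)
  also have "\<dots> = (\<integral>\<^sup>+\<omega>. ennreal (3 * ((X 0 \<omega>)\<^sup>2 + (X T \<omega>)\<^sup>2)) \<partial>M) + (\<integral>\<^sup>+\<omega>. ennreal (3 * (Z \<omega>)\<^sup>2) \<partial>M)"
    using m0 om by (intro nn_integral_add) auto
  also have "(\<integral>\<^sup>+\<omega>. ennreal (3 * ((X 0 \<omega>)\<^sup>2 + (X T \<omega>)\<^sup>2)) \<partial>M) = 3 * (\<integral>\<^sup>+\<omega>. ennreal ((X 0 \<omega>)\<^sup>2 + (X T \<omega>)\<^sup>2) \<partial>M)"
  proof -
    have "(\<integral>\<^sup>+\<omega>. ennreal (3 * ((X 0 \<omega>)\<^sup>2 + (X T \<omega>)\<^sup>2)) \<partial>M) = (\<integral>\<^sup>+\<omega>. 3 * ennreal ((X 0 \<omega>)\<^sup>2 + (X T \<omega>)\<^sup>2) \<partial>M)"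
      by (intro nn_integral_cong) (rule e3; simp)
    also have "\<dots> = 3 * (\<integral>\<^sup>+\<omega>. ennreal ((X 0 \<omega>)\<^sup>2 + (X T \<omega>)\<^sup>2) \<partial>M)"
      using m0 by (intro nn_integral_cmult) auto
    finally show ?thesis .
  qed
  also have "(\<integral>\<^sup>+\<omega>. ennreal (3 * (Z \<omega>)\<^sup>2) \<partial>M) = 3 * (\<integral>\<^sup>+\<omega>. ennreal ((Z \<omega>)\<^sup>2) \<partial>M)"
  proof -
    have "(\<integral>\<^sup>+\<omega>. ennreal (3 * (Z \<omega>)\<^sup>2) \<partial>M) = (\<integral>\<^sup>+\<omega>. 3 * ennreal ((Z \<omega>)\<^sup>2) \<partial>M)"
      by (intro nn_integral_cong) (rule e3; simp)
    also have "\<dots> = 3 * (\<integral>\<^sup>+\<omega>. ennreal ((Z \<omega>)\<^sup>2) \<partial>M)"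
      using om by (intro nn_integral_cmult) auto
    finally show ?thesis .
  qed
  also have "3 * (\<integral>\<^sup>+\<omega>. ennreal ((Z \<omega>)\<^sup>2) \<partial>M) \<le> 3 * ennreal (1 + 4*A/(1 - 4 / 2 powr (4*\<beta>)))"
    using mom by (rule mult_left_mono) simp
  finally show ?thesis unfolding A_def by (simp add: add_left_mono)
qed



definition dyad :: "real \<Rightarrow> nat \<Rightarrow> real set" where
  "dyad T n = (\<lambda>k. real k * T / 2^n) ` {0..2^n}"

lemma dyad_props:
  assumes "T > 0"
  shows "finite (dyad T n)" "0 \<in> dyad T n" "T \<in> dyad T n" "dyad T n \<subseteq> {0..T}"
    "dyad T n \<subseteq> dyad T (Suc n)"
proof -
  show "finite (dyad T n)" by (simp add: dyad_def)
  show "0 \<in> dyad T n" unfolding dyad_def by (rule image_eqI[where x=0]) auto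
  show "T \<in> dyad T n" unfolding dyad_def by (rule image_eqI[where x="2^n"]) auto
  show "dyad T n \<subseteq> {0..T}"
  proof
    fix s assume "s \<in> dyad T n"
    then obtain k where k: "k \<le> 2^n" "s = real k * T / 2^n" by (auto simp: dyad_def)
    have "real k \<le> 2^n" using k(1) by (metis of_nat_le_iff of_nat_numeral of_nat_power)
    then have "real k * T \<le> 2^n * T" using assms by (intro mult_right_mono) auto
    then have "real k * T / 2^n \<le> 2^n * T / 2^n" by (intro divide_right_mono) auto
    then have "s \<le> T" using k(2) by simp
    moreover have "0 \<le> s" using k(2) assms by simp
    ultimately show "s \<in> {0..T}" by simp
  qed
  show "dyad T n \<subseteq> dyad T (Suc n)"
  proof
    fix s assume "s \<in> dyad T n"
    then obtain k where k: "k \<le> 2^n" "s = real k * T / 2^n" by (auto simp: dyad_def)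
    show "s \<in> dyad T (Suc n)" unfolding dyad_def
      by (rule image_eqI[where x="2*k"]) (use k in auto)
  qed
qed

lemma sup_dyadic:
  fixes x :: "real \<Rightarrow> real"
  assumes T: "T > 0" and rc: "\<And>t. t \<in> {0..<T} \<Longrightarrow> (x \<longlongrightarrow> x t) (at_right t)"
    and t: "t \<in> {0..T}"
  shows "ennreal (\<bar>x t\<bar>\<^sup>2) \<le> (SUP n. SUP s\<in>dyad T n. ennreal (\<bar>x s\<bar>\<^sup>2))"
proof (cases "t = T")
  case True
  have "ennreal (\<bar>x t\<bar>\<^sup>2) \<le> (SUP s\<in>dyad T 0. ennreal (\<bar>x s\<bar>\<^sup>2))"
    using dyad_props[OF T] True by (intro SUP_upper) auto
  also have "\<dots> \<le> (SUP n. SUP s\<in>dyad T n. ennreal (\<bar>x s\<bar>\<^sup>2))" by (rule SUP_upper) auto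
  finally show ?thesis .
next
  case False
  then have tT: "0 \<le> t" "t < T" using t by auto
  define fl where "fl = (\<lambda>n::nat. \<lfloor>t * 2^n / T\<rfloor>)"
  define s where "s = (\<lambda>n. real (nat (fl n + 1)) * T / 2^n)"
  have fl0: "0 \<le> fl n" for n unfolding fl_def using tT T by auto
  have sreal: "real (nat (fl n + 1)) = of_int (fl n) + 1" for n using fl0[of n] by simp
  have fl1: "of_int (fl n) \<le> t * 2^n / T" "t * 2^n / T < of_int (fl n) + 1" for n
    unfolding fl_def by linarith+
  have flT: "fl n + 1 \<le> 2^n" for n
  proof -
    have "t * 2^n / T < 2^n" using tT T by (simp add: field_simps)
    then have "of_int (fl n) < (2::real)^n" using fl1(1)[of n] by linarith
    then have "fl n < 2^n" by (metis of_int_less_iff of_int_numeral of_int_power)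
    then show ?thesis by simp
  qed
  have sD: "s n \<in> dyad T n" for n
  proof -
    have "nat (fl n + 1) \<le> nat (2^n)" using flT[of n] by (rule nat_mono)
    then have "nat (fl n + 1) \<le> 2^n" by (simp add: nat_power_eq)
    then show ?thesis unfolding s_def dyad_def by (intro image_eqI[where x="nat (fl n + 1)"]) auto
  qed
  have s_gt: "t < s n" for n
  proof -
    have "t * 2^n / T < of_int (fl n) + 1" by (rule fl1(2))
    then have "t * 2^n < (of_int (fl n) + 1) * T" using T by (simp add: field_simps)
    then show ?thesis unfolding s_def sreal by (simp add: field_simps)
  qed
  have s_le: "s n \<le> t + T / 2^n" for n
  proof -
    have "of_int (fl n) * T \<le> t * 2^n" using fl1(1)[of n] T by (simp add: field_simps)
    then show ?thesis unfolding s_def sreal by (simp add: field_simps)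
  qed
  have lim0: "(\<lambda>n. t + T / 2^n) \<longlonglongrightarrow> t + 0"
    by (intro tendsto_intros) (simp add: LIMSEQ_divide_realpow_zero)
  have slim: "s \<longlonglongrightarrow> t"
  proof (rule tendsto_sandwich[of "\<lambda>n. t" s _ "\<lambda>n. t + T / 2^n"])
    show "\<forall>\<^sub>F n in sequentially. t \<le> s n" using s_gt less_imp_le by (intro always_eventually) blast
    show "\<forall>\<^sub>F n in sequentially. s n \<le> t + T / 2^n" using s_le by (intro always_eventually) blast
    show "(\<lambda>n. t + T / 2^n) \<longlonglongrightarrow> t" using lim0 by simp
  qed simp
  have fs: "filterlim s (at_right t) sequentially"
    by (rule tendsto_imp_filterlim_at_right[OF slim]) (use s_gt in auto)
  have t': "t \<in> {0..<T}" using tT by simp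
  have "(\<lambda>n. x (s n)) \<longlonglongrightarrow> x t" using filterlim_compose[OF rc[OF t'] fs] .
  then have L: "(\<lambda>n. ennreal (\<bar>x (s n)\<bar>\<^sup>2)) \<longlonglongrightarrow> ennreal (\<bar>x t\<bar>\<^sup>2)"
    by (rule tendsto_ennrealI[OF tendsto_power[OF tendsto_rabs]])
  show ?thesis
  proof (rule tendsto_upperbound[OF L], rule always_eventually, rule allI)
    fix n
    have "ennreal (\<bar>x (s n)\<bar>\<^sup>2) \<le> (SUP s\<in>dyad T n. ennreal (\<bar>x s\<bar>\<^sup>2))" using sD by (rule SUP_upper)
    also have "\<dots> \<le> (SUP n. SUP s\<in>dyad T n. ennreal (\<bar>x s\<bar>\<^sup>2))" by (rule SUP_upper) auto
    finally show "ennreal (\<bar>x (s n)\<bar>\<^sup>2) \<le> (SUP n. SUP s\<in>dyad T n. ennreal (\<bar>x s\<bar>\<^sup>2))" .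
  qed simp
qed



theorem theorem3p1:
  fixes T :: real
    and M :: "nat \<Rightarrow> 'w measure"
    and X :: "nat \<Rightarrow> real \<Rightarrow> 'w \<Rightarrow> real"
    and G :: "real \<Rightarrow> real"
    and \<alpha> \<beta> :: real
  assumes T_pos: "T > 0"
    and prob: "\<And>N. N \<ge> 1 \<Longrightarrow> prob_space (M N)"
    and meas: "\<And>N t. N \<ge> 1 \<Longrightarrow> t \<in> {0..T} \<Longrightarrow> X N t \<in> borel_measurable (M N)"
    and cadlag: "\<And>N \<omega>. N \<ge> 1 \<Longrightarrow> \<omega> \<in> space (M N) \<Longrightarrow> cadlag_on T (\<lambda>t. X N t \<omega>)"
    and moments: "(SUP N\<in>{1..}. \<integral>\<^sup>+ \<omega>. ennreal ((X N 0 \<omega>)\<^sup>2 + (X N T \<omega>)\<^sup>2) \<partial>M N) < \<infinity>"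
    and alpha: "\<alpha> > 1/2" and beta: "\<beta> > 1/2"
    and G_mono: "mono_on {0..T} G" and G_cont: "continuous_on {0..T} G" and G0: "G 0 = 0"
    and tight: "\<And>N r s t c. N \<ge> 1 \<Longrightarrow> 0 \<le> r \<Longrightarrow> r \<le> s \<Longrightarrow> s \<le> t \<Longrightarrow> t \<le> T \<Longrightarrow> c > 0 \<Longrightarrow>
        measure (M N) {\<omega> \<in> space (M N). min \<bar>X N s \<omega> - X N r \<omega>\<bar> \<bar>X N t \<omega> - X N s \<omega>\<bar> \<ge> c}
          \<le> (G t - G r) powr (2 * \<alpha>) / c powr (4 * \<beta>)"
  shows "(SUP N\<in>{1..}. \<integral>\<^sup>+ \<omega>. (SUP t\<in>{0..T}. ennreal (\<bar>X N t \<omega>\<bar>\<^sup>2)) \<partial>M N) < \<infinity>"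
proof -
  define C where "C = 1 + 4 * (KK \<alpha> \<beta> * (G T - G 0) powr (2*\<alpha>)) / (1 - 4 / 2 powr (4*\<beta>))"
  define Ms where "Ms = (SUP N\<in>{1..}. \<integral>\<^sup>+ \<omega>. ennreal ((X N 0 \<omega>)\<^sup>2 + (X N T \<omega>)\<^sup>2) \<partial>M N)"
  have bound: "(\<integral>\<^sup>+ \<omega>. (SUP t\<in>{0..T}. ennreal (\<bar>X N t \<omega>\<bar>\<^sup>2)) \<partial>M N) \<le> 3 * Ms + 3 * ennreal C"
    if N: "N \<ge> 1" for N
  proof -
    interpret P: prob_space "M N" using prob[OF N] .
    have mN: "(\<integral>\<^sup>+ \<omega>. ennreal ((X N 0 \<omega>)\<^sup>2 + (X N T \<omega>)\<^sup>2) \<partial>M N) \<le> Ms"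
      unfolding Ms_def using N by (intro SUP_upper) auto
    define f where "f = (\<lambda>n \<omega>. SUP s\<in>dyad T n. ennreal (\<bar>X N s \<omega>\<bar>\<^sup>2))"
    have fb: "integral\<^sup>N (M N) (f n) \<le> 3 * Ms + 3 * ennreal C" for n
    proof -
      note D = dyad_props[OF T_pos, of n]
      have "integral\<^sup>N (M N) (f n) \<le> 3 * (\<integral>\<^sup>+ \<omega>. ennreal ((X N 0 \<omega>)\<^sup>2 + (X N T \<omega>)\<^sup>2) \<partial>M N) + 3 * ennreal C"
        unfolding f_def C_def
        by (rule P.finite_sup_bound[OF meas[OF N] G_mono alpha beta tight[OF N] D(1-4)])
      also have "\<dots> \<le> 3 * Ms + 3 * ennreal C"
        using mN by (intro add_right_mono mult_left_mono) auto
      finally show ?thesis .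
    qed
    have inc: "incseq f"
      unfolding incseq_def f_def
      by (intro allI impI le_funI SUP_subset_mono order_refl)
        (use dyad_props(5)[OF T_pos] lift_Suc_mono_le[of "dyad T"] in auto)
    have fm: "f n \<in> borel_measurable (M N)" for n
      unfolding f_def
    proof (rule borel_measurable_SUP)
      show "countable (dyad T n)" using dyad_props(1)[OF T_pos] by (rule countable_finite)
      fix s assume "s \<in> dyad T n"
      then have "X N s \<in> borel_measurable (M N)" using dyad_props(4)[OF T_pos] meas[OF N] by blast
      then show "(\<lambda>\<omega>. ennreal (\<bar>X N s \<omega>\<bar>\<^sup>2)) \<in> borel_measurable (M N)" by measurable
    qed
    have "(\<integral>\<^sup>+ \<omega>. (SUP t\<in>{0..T}. ennreal (\<bar>X N t \<omega>\<bar>\<^sup>2)) \<partial>M N) \<le> (\<integral>\<^sup>+ \<omega>. (SUP n. f n \<omega>) \<partial>M N)"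
    proof (rule nn_integral_mono)
      fix \<omega> assume w: "\<omega> \<in> space (M N)"
      have rc: "((\<lambda>t. X N t \<omega>) \<longlongrightarrow> X N t \<omega>) (at_right t)" if "t \<in> {0..<T}" for t
        using cadlag[OF N w] that unfolding cadlag_on_def by blast
      show "(SUP t\<in>{0..T}. ennreal (\<bar>X N t \<omega>\<bar>\<^sup>2)) \<le> (SUP n. f n \<omega>)"
        unfolding f_def by (rule SUP_least) (rule sup_dyadic[OF T_pos rc])
    qed
    also have "\<dots> = (SUP n. integral\<^sup>N (M N) (f n))"
      by (rule nn_integral_monotone_convergence_SUP[OF inc fm])
    also have "\<dots> \<le> 3 * Ms + 3 * ennreal C" by (rule SUP_least) (rule fb)
    finally show ?thesis .
  qed
  have "(SUP N\<in>{1..}. \<integral>\<^sup>+ \<omega>. (SUP t\<in>{0..T}. ennreal (\<bar>X N t \<omega>\<bar>\<^sup>2)) \<partial>M N) \<le> 3 * Ms + 3 * ennreal C"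
    by (rule SUP_least) (use bound in auto)
  also have "\<dots> < \<infinity>" using moments unfolding Ms_def
    by (simp add: ennreal_add_less_top ennreal_mult_less_top)
  finally show ?thesis .
qed

end
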